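(* Assume each $\tilde f_{i,j}:\mathbb{R}^d\to\mathbb{R}$ is convex and $\tilde L$-smooth, let $\lambda>0$ and $p\in(0,1)$, and let $x,w\in\mathbb{R}^{nd}$ be arbitrary. Let $g\in\mathbb{R}^{nd}$ be the random estimator defined in the context. Then $$\mathbb{E}\,\|g-\nabla F(x)\|^2\le2\mathcal{L}\,D_F(w,x),\qquad\text{where }\ \mathcal{L}=\max\Big\{\frac{\tilde L}{n(1-p)},\frac{\lambda}{np}\Big\}.$$
   Context: Each local loss is a finite sum $f_i=\frac1m\sum_{j=1}^m\tilde f_{i,j}$. For $x=[x_1,\dots,x_n]\in\mathbb{R}^{nd}$, define $$F(x)=\frac1n\sum_i f_i(x_i)+\frac{\lambda}{2n}\sum_i\|x_i-\bar x\|^2,\qquad \bar x=\frac1n\sum_i x_i .$$ Its gradient has blocks $(\nabla F(x))_i=\frac1n\nabla f_i(x_i)+\frac\lambda n(x_i-\bar x)$. The Bregman divergence is $D_F(w,x)=F(w)-F(x)-\langle\nabla F(x),w-x\rangle$. The estimator $g$ is defined as follows. - With probability $1-p$: for each client $i$ an index $j\in\{1,\dots,m\}$ is drawn uniformly at random, and $$g_i=\frac{1}{n(1-p)}\big(\nabla\tilde f_{i,j}(x_i)-\nabla\tilde f_{i,j}(w_i)\big)+\frac1n\nabla f_i(w_i)+\frac\lambda n(w_i-\bar w).$$ - With probability $p$: $$g_i=\frac{\lambda}{np}(x_i-\bar x)-\frac{(p^{-1}-1)\lambda}{n}(w_i-\bar w)+\frac1n\nabla f_i(w_i).$$ *)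

theory Defs
  imports "HOL-Analysis.Analysis"
begin

text \<open>Clients are indexed by i < n, local samples by j < m. A point of R^{nd} is a
  family x :: nat => 'a of n blocks in 'a (a Euclidean space standing for R^d).
  ft i j is the sample loss f~_{i,j}; gt i j is its gradient.\<close>

definition L_smooth :: "('a::euclidean_space \<Rightarrow> real) \<Rightarrow> ('a \<Rightarrow> 'a) \<Rightarrow> real \<Rightarrow> bool" where
  "L_smooth f g L \<longleftrightarrow>
     (\<forall>y. (f has_derivative (\<lambda>h. g y \<bullet> h)) (at y)) \<and>
     (\<forall>y z. norm (g y - g z) \<le> L * norm (y - z))"

definition avg :: "nat \<Rightarrow> (nat \<Rightarrow> 'a::real_vector) \<Rightarrow> 'a" where
  "avg n x = (1 / real n) *\<^sub>R (\<Sum>i<n. x i)"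

definition loc_f :: "(nat \<Rightarrow> nat \<Rightarrow> 'a \<Rightarrow> real) \<Rightarrow> nat \<Rightarrow> nat \<Rightarrow> 'a \<Rightarrow> real" where
  "loc_f ft m i y = (1 / real m) * (\<Sum>j<m. ft i j y)"

definition loc_g :: "(nat \<Rightarrow> nat \<Rightarrow> 'a \<Rightarrow> 'a::real_vector) \<Rightarrow> nat \<Rightarrow> nat \<Rightarrow> 'a \<Rightarrow> 'a" where
  "loc_g gt m i y = (1 / real m) *\<^sub>R (\<Sum>j<m. gt i j y)"

definition FF :: "nat \<Rightarrow> nat \<Rightarrow> real \<Rightarrow> (nat \<Rightarrow> nat \<Rightarrow> 'a::real_normed_vector \<Rightarrow> real)
                  \<Rightarrow> (nat \<Rightarrow> 'a) \<Rightarrow> real" where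
  "FF n m lam ft x = (1 / real n) * (\<Sum>i<n. loc_f ft m i (x i))
      + lam / (2 * real n) * (\<Sum>i<n. (norm (x i - avg n x))\<^sup>2)"

definition gradF :: "nat \<Rightarrow> nat \<Rightarrow> real \<Rightarrow> (nat \<Rightarrow> nat \<Rightarrow> 'a \<Rightarrow> 'a::real_vector)
                    \<Rightarrow> (nat \<Rightarrow> 'a) \<Rightarrow> nat \<Rightarrow> 'a" where
  "gradF n m lam gt x i = (1 / real n) *\<^sub>R loc_g gt m i (x i) + (lam / real n) *\<^sub>R (x i - avg n x)"

definition bregF :: "nat \<Rightarrow> nat \<Rightarrow> real \<Rightarrow> (nat \<Rightarrow> nat \<Rightarrow> 'a::real_inner \<Rightarrow> real)
                    \<Rightarrow> (nat \<Rightarrow> nat \<Rightarrow> 'a \<Rightarrow> 'a) \<Rightarrow> (nat \<Rightarrow> 'a) \<Rightarrow> (nat \<Rightarrow> 'a) \<Rightarrow> real" where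
  "bregF n m lam ft gt w x = FF n m lam ft w - FF n m lam ft x
      - (\<Sum>i<n. gradF n m lam gt x i \<bullet> (w i - x i))"

definition sqnorm :: "nat \<Rightarrow> (nat \<Rightarrow> 'a::real_normed_vector) \<Rightarrow> real" where
  "sqnorm n v = (\<Sum>i<n. (norm (v i))\<^sup>2)"

text \<open>Estimator, branch taken with probability 1-p; J i is the index drawn by client i.\<close>
definition est1 :: "nat \<Rightarrow> nat \<Rightarrow> real \<Rightarrow> real \<Rightarrow> (nat \<Rightarrow> nat \<Rightarrow> 'a \<Rightarrow> 'a::real_vector)
                   \<Rightarrow> (nat \<Rightarrow> 'a) \<Rightarrow> (nat \<Rightarrow> 'a) \<Rightarrow> (nat \<Rightarrow> nat) \<Rightarrow> nat \<Rightarrow> 'a" where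
  "est1 n m lam p gt x w J i =
     (1 / (real n * (1 - p))) *\<^sub>R (gt i (J i) (x i) - gt i (J i) (w i))
     + (1 / real n) *\<^sub>R loc_g gt m i (w i) + (lam / real n) *\<^sub>R (w i - avg n w)"

text \<open>Estimator, branch taken with probability p.\<close>
definition est2 :: "nat \<Rightarrow> nat \<Rightarrow> real \<Rightarrow> real \<Rightarrow> (nat \<Rightarrow> nat \<Rightarrow> 'a \<Rightarrow> 'a::real_vector)
                   \<Rightarrow> (nat \<Rightarrow> 'a) \<Rightarrow> (nat \<Rightarrow> 'a) \<Rightarrow> nat \<Rightarrow> 'a" where
  "est2 n m lam p gt x w i =
     (lam / (real n * p)) *\<^sub>R (x i - avg n x)
     - ((1 / p - 1) * lam / real n) *\<^sub>R (w i - avg n w)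
     + (1 / real n) *\<^sub>R loc_g gt m i (w i)"

text \<open>E ||g - grad F(x)||^2: with probability 1-p the indices J are i.i.d. uniform on
  {..<m} (uniform over all J in PiE), with probability p the second branch.\<close>
definition expected_err :: "nat \<Rightarrow> nat \<Rightarrow> real \<Rightarrow> real \<Rightarrow> (nat \<Rightarrow> nat \<Rightarrow> 'a \<Rightarrow> 'a::real_normed_vector)
                   \<Rightarrow> (nat \<Rightarrow> 'a) \<Rightarrow> (nat \<Rightarrow> 'a) \<Rightarrow> real" where
  "expected_err n m lam p gt x w =
     (1 - p) * ((\<Sum>J\<in>PiE {..<n} (\<lambda>_. {..<m}).
                   sqnorm n (\<lambda>i. est1 n m lam p gt x w J i - gradF n m lam gt x i))
                / real (card (PiE {..<n} (\<lambda>_. {..<m}) :: (nat \<Rightarrow> nat) set)))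
     + p * sqnorm n (\<lambda>i. est2 n m lam p gt x w i - gradF n m lam gt x i)"

end

theory Submission
  imports Defs
begin


lemma line_deriv:
  fixes f :: "'a::euclidean_space \<Rightarrow> real"
  assumes "\<forall>y. (f has_derivative (\<lambda>h. g y \<bullet> h)) (at y)"
  shows "((\<lambda>t. f (z + t *\<^sub>R v)) has_real_derivative (g (z + t *\<^sub>R v) \<bullet> v)) (at t)"
proof -
  have d1: "((\<lambda>t::real. z + t *\<^sub>R v) has_derivative (\<lambda>s. s *\<^sub>R v)) (at t)"
    by (auto intro!: derivative_eq_intros)
  have "((\<lambda>t. f (z + t *\<^sub>R v)) has_derivative (\<lambda>s. g (z + t *\<^sub>R v) \<bullet> (s *\<^sub>R v))) (at t)"
    using diff_chain_at[OF d1 assms[rule_format, of "z + t *\<^sub>R v"]] by (simp add: o_def)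
  then show ?thesis
    by (simp add: has_field_derivative_def mult.commute[of _ "g (z + t *\<^sub>R v) \<bullet> v"] fun_eq_iff)
qed

lemma descent:
  fixes f :: "'a::euclidean_space \<Rightarrow> real"
  assumes "L_smooth f g L"
  shows "f y \<le> f z + g z \<bullet> (y - z) + L / 2 * (norm (y - z))\<^sup>2"
proof -
  define v where "v = y - z"
  have D: "\<forall>y. (f has_derivative (\<lambda>h. g y \<bullet> h)) (at y)" and Lip: "\<And>a b. norm (g a - g b) \<le> L * norm (a - b)"
    using assms unfolding L_smooth_def by auto
  define k where "k t = f (z + t *\<^sub>R v) - t * (g z \<bullet> v) - L / 2 * t\<^sup>2 * (norm v)\<^sup>2" for t
  have "k 0 \<ge> k 1"
  proof (rule DERIV_nonpos_imp_nonincreasing[of 0 1 k])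
    fix t :: real assume t: "0 \<le> t" "t \<le> 1"
    have "(k has_real_derivative (g (z + t *\<^sub>R v) \<bullet> v - g z \<bullet> v - L / 2 * (2 * t) * (norm v)\<^sup>2)) (at t)"
      unfolding k_def
      apply (intro DERIV_diff[OF DERIV_diff[OF line_deriv[OF D]]])
      subgoal by (auto intro!: derivative_eq_intros)
      subgoal by (rule derivative_eq_intros refl | simp)+
      done
    moreover have "g (z + t *\<^sub>R v) \<bullet> v - g z \<bullet> v - L / 2 * (2 * t) * (norm v)\<^sup>2 \<le> 0"
    proof -
      have "g (z + t *\<^sub>R v) \<bullet> v - g z \<bullet> v = (g (z + t *\<^sub>R v) - g z) \<bullet> v" by (simp add: inner_diff_left)
      also have "\<dots> \<le> norm (g (z + t *\<^sub>R v) - g z) * norm v" by (rule norm_cauchy_schwarz)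
      also have "\<dots> \<le> (L * norm (t *\<^sub>R v)) * norm v"
        using Lip[of "z + t *\<^sub>R v" z] by (intro mult_right_mono) auto
      also have "\<dots> = L * t * (norm v)\<^sup>2" using t by (simp add: power2_eq_square)
      finally show ?thesis by simp
    qed
    ultimately show "\<exists>y. (k has_real_derivative y) (at t) \<and> y \<le> 0" by blast
  qed simp
  then show ?thesis unfolding k_def v_def by (simp add: algebra_simps)
qed

lemma tangent:
  fixes f :: "'a::euclidean_space \<Rightarrow> real"
  assumes "L_smooth f g L" and cv: "convex_on UNIV f"
  shows "f y \<ge> f z + g z \<bullet> (y - z)"
proof -
  define v where "v = y - z"
  have D: "\<forall>y. (f has_derivative (\<lambda>h. g y \<bullet> h)) (at y)"
    using assms unfolding L_smooth_def by auto
  define h where "h t = f (z + t *\<^sub>R v)" for t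
  have "convex_on UNIV h"
  proof (rule convex_onI)
    fix t a b :: real assume t: "0 < t" "t < 1"
    have "h ((1 - t) *\<^sub>R a + t *\<^sub>R b) = f ((1 - t) *\<^sub>R (z + a *\<^sub>R v) + t *\<^sub>R (z + b *\<^sub>R v))"
      unfolding h_def by (simp add: algebra_simps)
    also have "\<dots> \<le> (1 - t) * h a + t * h b"
      unfolding h_def using t by (intro convex_onD[OF cv]) auto
    finally show "h ((1 - t) *\<^sub>R a + t *\<^sub>R b) \<le> (1 - t) * h a + t * h b" .
  qed simp
  moreover have "(h has_field_derivative (g z \<bullet> v)) (at 0 within UNIV)"
    unfolding h_def using line_deriv[OF D, of z v 0] by simp
  ultimately have "h 1 - h 0 \<ge> (g z \<bullet> v) * (1 - 0)"
    by (intro convex_on_imp_above_tangent) auto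
  then show ?thesis unfolding h_def v_def by simp
qed

lemma L_nonneg:
  fixes f :: "'a::euclidean_space \<Rightarrow> real"
  assumes "L_smooth f g L" shows "L \<ge> 0"
proof -
  obtain e :: 'a where e: "norm e = 1" using vector_choose_size[of 1] by auto
  have "0 \<le> norm (g e - g 0)" by simp
  also have "\<dots> \<le> L * norm (e - 0)" using assms unfolding L_smooth_def by blast
  finally show ?thesis using e by simp
qed

lemma cocoercive:
  fixes f :: "'a::euclidean_space \<Rightarrow> real"
  assumes sm: "L_smooth f g L" and cv: "convex_on UNIV f"
  shows "(norm (g x - g w))\<^sup>2 \<le> 2 * L * (f w - f x - g x \<bullet> (w - x))"
proof (cases "L = 0")
  case True
  have "norm (g x - g w) \<le> 0" using sm True unfolding L_smooth_def by (metis mult_zero_left)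
  then show ?thesis using True by simp
next
  case False
  with L_nonneg[OF sm] have L: "L > 0" by simp
  define e where "e = g w - g x"
  define y where "y = w - (1 / L) *\<^sub>R e"
  have 1: "f y \<le> f w + g w \<bullet> (y - w) + L / 2 * (norm (y - w))\<^sup>2" by (rule descent[OF sm])
  have 2: "f y \<ge> f x + g x \<bullet> (y - x)" by (rule tangent[OF sm cv])
  have "g x \<bullet> (y - x) = g x \<bullet> (w - x) + g x \<bullet> (y - w)" by (simp add: inner_diff_right)
  with 1 2 have "f x + g x \<bullet> (w - x) \<le> f w + e \<bullet> (y - w) + L / 2 * (norm (y - w))\<^sup>2"
    unfolding e_def by (simp add: inner_diff_left)
  also have "e \<bullet> (y - w) = - (1/L) * (norm e)\<^sup>2" unfolding y_def by (simp add: power2_norm_eq_inner)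
  also have "L / 2 * (norm (y - w))\<^sup>2 = (1 / (2*L)) * (norm e)\<^sup>2" unfolding y_def using L
    by (simp add: power2_eq_square field_simps)
  finally have "(1/(2*L)) * (norm e)\<^sup>2 \<le> f w - f x - g x \<bullet> (w - x)" using L by (simp add: field_simps)
  then show ?thesis using L unfolding e_def by (simp add: field_simps norm_minus_commute)
qed



lemma set_fix: "i < n \<Longrightarrow> j < (m::nat) \<Longrightarrow> {J \<in> PiE {..<n} (\<lambda>_. {..<m}). J i = j} = PiE {..<n} (\<lambda>k. if k = i then {j} else {..<m})"
proof (rule set_eqI)
  fix J assume a: "i < n" "j < m"
  show "J \<in> {J \<in> PiE {..<n} (\<lambda>_. {..<m}). J i = j} \<longleftrightarrow> J \<in> PiE {..<n} (\<lambda>k. if k = i then {j} else {..<m})"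
  proof
    assume "J \<in> {J \<in> PiE {..<n} (\<lambda>_. {..<m}). J i = j}"
    then have "\<forall>k\<in>{..<n}. J k \<in> {..<m}" "J \<in> extensional {..<n}" "J i = j" by (auto simp: PiE_iff)
    then show "J \<in> PiE {..<n} (\<lambda>k. if k = i then {j} else {..<m})" unfolding PiE_iff by auto
  next
    assume "J \<in> PiE {..<n} (\<lambda>k. if k = i then {j} else {..<m})"
    then have h: "\<forall>k\<in>{..<n}. J k \<in> (if k = i then {j} else {..<m})" "J \<in> extensional {..<n}"
      by (auto simp: PiE_iff)
    from h(1) a have "J i = j" by (metis lessThan_iff singletonD)
    moreover have "\<forall>k\<in>{..<n}. J k \<in> {..<m}" using h(1) a by (metis lessThan_iff singletonD)
    ultimately show "J \<in> {J \<in> PiE {..<n} (\<lambda>_. {..<m}). J i = j}" using h(2) by (auto simp: PiE_iff)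
  qed
qed

lemma avg_sum:
  fixes h :: "nat \<Rightarrow> real"
  assumes "i < n" "m \<ge> 1"
  shows "(\<Sum>J\<in>PiE {..<n} (\<lambda>_. {..<m}). h (J i)) / real (card (PiE {..<n} (\<lambda>_. {..<m}) :: (nat \<Rightarrow> nat) set))
       = (1 / real m) * (\<Sum>j<m. h j)"
proof -
  let ?P = "PiE {..<n} (\<lambda>_. {..<m}) :: (nat \<Rightarrow> nat) set"
  have fin: "finite ?P" by (simp add: finite_PiE)
  have cardP: "card ?P = m ^ n" by (simp add: card_PiE)
  have cj: "card {J \<in> ?P. J i = j} = m ^ (n - 1)" if j: "j < m" for j
  proof -
    have "{J \<in> ?P. J i = j} = PiE {..<n} (\<lambda>k. if k = i then {j} else {..<m})"
      using assms(1) j by (rule set_fix)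
    then have "card {J \<in> ?P. J i = j} = (\<Prod>k<n. card (if k = i then {j} else {..<m}))"
      by (simp add: card_PiE)
    also have "\<dots> = (\<Prod>k\<in>{..<n} - {i}. card (if k = i then {j} else {..<m}))"
      using assms by (simp add: prod.remove[of "{..<n}" i])
    also have "\<dots> = (\<Prod>k\<in>{..<n} - {i}. m)" by (intro prod.cong) auto
    also have "\<dots> = m ^ (n - 1)" using assms by simp
    finally show ?thesis .
  qed
  have "(\<Sum>J\<in>?P. h (J i)) = (\<Sum>J\<in>?P. \<Sum>j<m. if J i = j then h j else 0)"
  proof (intro sum.cong refl)
    fix J assume "J \<in> ?P"
    then have "J i < m" using assms by (auto simp: PiE_iff)
    then show "h (J i) = (\<Sum>j<m. if J i = j then h j else 0)" by (simp add: sum.delta')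
  qed
  also have "\<dots> = (\<Sum>j<m. \<Sum>J\<in>?P. if J i = j then h j else 0)" by (rule sum.swap)
  also have "\<dots> = (\<Sum>j<m. h j * real (m ^ (n - 1)))"
  proof (intro sum.cong refl)
    fix j assume "j \<in> {..<m}"
    have "(\<Sum>J\<in>?P. if J i = j then h j else 0) = (\<Sum>J\<in>{J \<in> ?P. J i = j}. h j)"
      using sum.inter_filter[OF fin, of "\<lambda>_. h j" "\<lambda>J. J i = j"] by simp
    also have "\<dots> = h j * real (m ^ (n - 1))" using cj \<open>j \<in> {..<m}\<close> by simp
    finally show "(\<Sum>J\<in>?P. if J i = j then h j else 0) = h j * real (m ^ (n - 1))" .
  qed
  finally have S: "(\<Sum>J\<in>?P. h (J i)) = (\<Sum>j<m. h j) * real m ^ (n - 1)"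
    by (simp add: sum_distrib_right)
  have "m ^ n = m * m ^ (n - 1)" using assms
    by (cases n) auto
  then have C: "real (card ?P) = real m * real m ^ (n - 1)" unfolding cardP by simp
  have K: "real m ^ (n - 1) \<noteq> 0" using assms by simp
  have gen: "\<And>s k M :: real. k \<noteq> 0 \<Longrightarrow> s * k / (M * k) = 1 / M * s" by simp
  show ?thesis unfolding S C by (rule gen[OF K])
qed


lemma real_ident:
  fixes DD DC CC M p n lam :: real
  assumes "0 < p" "p < 1" "n > 0"
  shows "(1-p) * ((1/(n*(1-p)))\<^sup>2 * M - 2*(1/(n*(1-p))) * ((1/n)*DD + (lam/n)*DC)
           + ((1/n)\<^sup>2*DD + 2*(1/n)*(lam/n)*DC + (lam/n)\<^sup>2*CC))
         + p * (((1/p-1)*lam/n)\<^sup>2 * CC - 2*((1/p-1)*lam/n)*(1/n)*DC + (1/n)\<^sup>2*DD)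
       = M / (n\<^sup>2*(1-p)) + lam\<^sup>2 * CC / (n\<^sup>2 * p) - (DD + 2*lam*DC + lam\<^sup>2*CC)/n\<^sup>2"
proof -
  have q: "1 - p \<noteq> 0" using assms by simp
  have "p \<noteq> 0" "n \<noteq> 0" using assms by auto
  with q show ?thesis
    by (simp add: divide_simps power2_eq_square) algebra
qed


lemma avg_sq:
  fixes d :: "nat \<Rightarrow> 'a::real_inner"
  assumes "m \<ge> 1"
  shows "(1/real m) * (\<Sum>j<m. (norm (a *\<^sub>R d j - b))\<^sup>2)
     = a\<^sup>2 * ((1/real m) * (\<Sum>j<m. (norm (d j))\<^sup>2)) - 2 * a * (((1/real m) *\<^sub>R (\<Sum>j<m. d j)) \<bullet> b) + (norm b)\<^sup>2"
proof -
  have "(\<Sum>j<m. (norm (a *\<^sub>R d j - b))\<^sup>2) = (\<Sum>j<m. a\<^sup>2 * (norm (d j))\<^sup>2 - 2 * a * (d j \<bullet> b) + (norm b)\<^sup>2)"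
    by (intro sum.cong refl) (unfold power2_norm_eq_inner, simp add: inner_diff_left inner_diff_right inner_commute power2_eq_square algebra_simps)
  also have "\<dots> = a\<^sup>2 * (\<Sum>j<m. (norm (d j))\<^sup>2) - 2 * a * ((\<Sum>j<m. d j) \<bullet> b) + real m * (norm b)\<^sup>2"
    by (simp add: sum.distrib sum_subtractf sum_distrib_left inner_sum_left)
  finally show ?thesis using assms by (simp add: field_simps)
qed

lemma sum_centered:
  fixes x :: "nat \<Rightarrow> 'a::real_vector"
  assumes "n \<ge> 1"
  shows "(\<Sum>i<n. x i - avg n x) = 0"
  using assms by (simp add: sum_subtractf avg_def sum_constant_scaleR)

lemma norm_lin2:
  fixes y z :: "'a::real_inner"
  shows "(norm (s *\<^sub>R y + t *\<^sub>R z))\<^sup>2 = s\<^sup>2 * (y \<bullet> y) + 2 * s * t * (y \<bullet> z) + t\<^sup>2 * (z \<bullet> z)"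
  unfolding power2_norm_eq_inner
  by (simp add: inner_add_left inner_add_right inner_commute power2_eq_square algebra_simps)



lemma per_i:
  fixes dl c :: "'a::real_inner" and M p n lam :: real
  assumes "0 < p" "p < 1" "n > 0"
  shows "(1-p) * ((1/(n*(1-p)))\<^sup>2 * M - 2*(1/(n*(1-p))) * (dl \<bullet> ((1/n) *\<^sub>R dl + (lam/n) *\<^sub>R c))
           + (norm ((1/n) *\<^sub>R dl + (lam/n) *\<^sub>R c))\<^sup>2)
         + p * (norm (((1/p-1)*lam/n) *\<^sub>R c - (1/n) *\<^sub>R dl))\<^sup>2
       \<le> M / (n\<^sup>2*(1-p)) + lam\<^sup>2 * (norm c)\<^sup>2 / (n\<^sup>2 * p)"
proof -
  have e1: "dl \<bullet> ((1/n) *\<^sub>R dl + (lam/n) *\<^sub>R c) = (1/n)*(dl\<bullet>dl) + (lam/n)*(dl\<bullet>c)"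
    by (simp add: inner_add_right)
  have e2: "(norm ((1/n) *\<^sub>R dl + (lam/n) *\<^sub>R c))\<^sup>2 = (1/n)\<^sup>2*(dl\<bullet>dl) + 2*(1/n)*(lam/n)*(dl\<bullet>c) + (lam/n)\<^sup>2*(c\<bullet>c)"
    by (rule norm_lin2)
  have e3: "(norm (B *\<^sub>R c - (1/n) *\<^sub>R dl))\<^sup>2 = B\<^sup>2 * (c\<bullet>c) - 2*B*(1/n)*(dl\<bullet>c) + (1/n)\<^sup>2*(dl\<bullet>dl)" for B
    using norm_lin2[of B c "-(1/n)" dl]
    by (simp add: inner_commute power2_eq_square)
  have e4: "(norm c)\<^sup>2 = c \<bullet> c" by (simp add: power2_norm_eq_inner)
  have nn: "0 \<le> (norm (dl + lam *\<^sub>R c))\<^sup>2" by simp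
  have e5: "(norm (dl + lam *\<^sub>R c))\<^sup>2 = dl\<bullet>dl + 2*lam*(dl\<bullet>c) + lam\<^sup>2*(c\<bullet>c)"
    using norm_lin2[of 1 dl lam c] by simp
  have "0 \<le> (dl\<bullet>dl + 2*lam*(dl\<bullet>c) + lam\<^sup>2*(c\<bullet>c)) / n\<^sup>2" using nn e5 by simp
  then show ?thesis
    unfolding e1 e2 e3 e4 real_ident[OF assms] by linarith
qed

theorem mainTheorem7:
  fixes n m :: nat and lam p Lt :: real
    and ft :: "nat \<Rightarrow> nat \<Rightarrow> 'a::euclidean_space \<Rightarrow> real"
    and gt :: "nat \<Rightarrow> nat \<Rightarrow> 'a \<Rightarrow> 'a"
    and x w :: "nat \<Rightarrow> 'a"
  assumes "n \<ge> 1" and "m \<ge> 1"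
    and "\<And>i j. i < n \<Longrightarrow> j < m \<Longrightarrow> convex_on UNIV (ft i j)"
    and "\<And>i j. i < n \<Longrightarrow> j < m \<Longrightarrow> L_smooth (ft i j) (gt i j) Lt"
    and "lam > 0" and "0 < p" and "p < 1"
  shows "expected_err n m lam p gt x w
           \<le> 2 * max (Lt / (real n * (1 - p))) (lam / (real n * p)) * bregF n m lam ft gt w x"
proof -
  note n = assms(1) and m = assms(2) and cvx = assms(3) and sm = assms(4) and lam = assms(5)
    and p = assms(6,7)
  have nr: "real n > 0" using n by simp
  define u where "u i = x i - avg n x" for i
  define v where "v i = w i - avg n w" for i
  define c where "c i = u i - v i" for i
  define d where "d i j = gt i j (x i) - gt i j (w i)" for i j
  define dl where "dl i = loc_g gt m i (x i) - loc_g gt m i (w i)" for i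
  define G where "G i = gradF n m lam gt x i" for i
  define D where "D i j = ft i j (w i) - ft i j (x i) - gt i j (x i) \<bullet> (w i - x i)" for i j
  define a where "a = 1 / (real n * (1 - p))"
  define b where "b i = (1 / real n) *\<^sub>R dl i + (lam / real n) *\<^sub>R c i" for i
  define \<beta> where "\<beta> = (1/p - 1) * lam / real n"
  define H where "H i j = (norm (a *\<^sub>R d i j - b i))\<^sup>2" for i j
  define P where "P = (PiE {..<n} (\<lambda>_. {..<m}) :: (nat \<Rightarrow> nat) set)"
  have dl_eq: "dl i = (1 / real m) *\<^sub>R (\<Sum>j<m. d i j)" for i
    unfolding dl_def d_def loc_g_def by (simp add: sum_subtractf scaleR_diff_right)
  have est1_eq: "est1 n m lam p gt x w J i - G i = a *\<^sub>R d i (J i) - b i" for J i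
    unfolding est1_def G_def gradF_def a_def d_def b_def dl_def c_def u_def v_def
    by (simp add: algebra_simps)
  have coef: "lam / (real n * p) - lam / real n = \<beta>"
    unfolding \<beta>_def using p nr by (simp add: field_simps)
  have est2_eq: "est2 n m lam p gt x w i - G i = \<beta> *\<^sub>R c i - (1 / real n) *\<^sub>R dl i" for i
  proof -
    have "est2 n m lam p gt x w i - G i
        = (lam / (real n * p) - lam / real n) *\<^sub>R u i - \<beta> *\<^sub>R v i - (1 / real n) *\<^sub>R dl i"
      unfolding est2_def G_def gradF_def dl_def u_def v_def \<beta>_def
      by (simp add: algebra_simps)
    then show ?thesis unfolding coef c_def by (simp add: algebra_simps)
  qed
  have EJ: "(\<Sum>J\<in>P. sqnorm n (\<lambda>i. est1 n m lam p gt x w J i - G i)) / real (card P)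
      = (\<Sum>i<n. (1 / real m) * (\<Sum>j<m. H i j))"
  proof -
    have "(\<Sum>J\<in>P. sqnorm n (\<lambda>i. est1 n m lam p gt x w J i - G i)) = (\<Sum>J\<in>P. \<Sum>i<n. H i (J i))"
      unfolding sqnorm_def est1_eq H_def by simp
    also have "\<dots> = (\<Sum>i<n. \<Sum>J\<in>P. H i (J i))" by (rule sum.swap)
    finally have "(\<Sum>J\<in>P. sqnorm n (\<lambda>i. est1 n m lam p gt x w J i - G i)) / real (card P)
        = (\<Sum>i<n. (\<Sum>J\<in>P. H i (J i)) / real (card P))" by (simp add: sum_divide_distrib)
    also have "\<dots> = (\<Sum>i<n. (1 / real m) * (\<Sum>j<m. H i j))"
      unfolding P_def using m by (intro sum.cong refl avg_sum) auto
    finally show ?thesis .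
  qed
  have LHS: "expected_err n m lam p gt x w
      = (\<Sum>i<n. (1-p) * ((1 / real m) * (\<Sum>j<m. H i j)) + p * (norm (est2 n m lam p gt x w i - G i))\<^sup>2)"
    unfolding expected_err_def G_def[symmetric] P_def[symmetric] EJ
    by (simp add: sum.distrib sum_distrib_left sqnorm_def)
  define M where "M i = (1 / real m) * (\<Sum>j<m. (norm (d i j))\<^sup>2)" for i
  have Mb: "M i \<le> 2 * Lt * ((1 / real m) * (\<Sum>j<m. D i j))" if i: "i < n" for i
  proof -
    have "(\<Sum>j<m. (norm (d i j))\<^sup>2) \<le> (\<Sum>j<m. 2 * Lt * D i j)"
      unfolding d_def D_def using i by (intro sum_mono cocoercive[OF sm cvx]) auto
    then have "(1 / real m) * (\<Sum>j<m. (norm (d i j))\<^sup>2) \<le> (1 / real m) * (\<Sum>j<m. 2 * Lt * D i j)"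
      by (intro mult_left_mono) auto
    also have "\<dots> = 2 * Lt * ((1 / real m) * (\<Sum>j<m. D i j))"
      by (simp add: sum_distrib_left[symmetric])
    finally show ?thesis unfolding M_def .
  qed
  have Dnn: "0 \<le> D i j" if "i < n" "j < m" for i j
    using tangent[OF sm[OF that] cvx[OF that], where y="w i" and z="x i"] unfolding D_def by simp
  have per: "(1-p) * ((1 / real m) * (\<Sum>j<m. H i j)) + p * (norm (est2 n m lam p gt x w i - G i))\<^sup>2
      \<le> M i / ((real n)\<^sup>2*(1-p)) + lam\<^sup>2 * (norm (c i))\<^sup>2 / ((real n)\<^sup>2 * p)" for i
  proof -
    have "(1 / real m) * (\<Sum>j<m. H i j) = a\<^sup>2 * M i - 2 * a * (dl i \<bullet> b i) + (norm (b i))\<^sup>2"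
      unfolding H_def M_def dl_eq using avg_sq[OF m] by simp
    then show ?thesis
      unfolding est2_eq a_def b_def \<beta>_def using per_i[OF p nr, of "M i" "dl i" lam "c i"]
      by (simp add: dl_eq)
  qed
  define S1 where "S1 = (1 / real n) * (\<Sum>i<n. (1 / real m) * (\<Sum>j<m. D i j))"
  define S2 where "S2 = lam / (2 * real n) * (\<Sum>i<n. (norm (c i))\<^sup>2)"
  have breg: "bregF n m lam ft gt w x = S1 + S2"
  proof -
    have fa: "loc_f ft m i (w i) - loc_f ft m i (x i) - loc_g gt m i (x i) \<bullet> (w i - x i)
        = (1 / real m) * (\<Sum>j<m. D i j)" for i
      unfolding loc_f_def loc_g_def D_def
      by (simp add: inner_sum_left sum_subtractf right_diff_distrib)
    have su: "(\<Sum>i<n. u i) = 0" unfolding u_def by (rule sum_centered[OF n])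
    have "(\<Sum>i<n. u i \<bullet> (w i - x i)) = (\<Sum>i<n. u i \<bullet> (v i - u i) + u i \<bullet> (avg n w - avg n x))"
      by (intro sum.cong refl) (simp add: u_def v_def inner_diff_right inner_add_right algebra_simps)
    also have "\<dots> = (\<Sum>i<n. u i \<bullet> (v i - u i))"
      using su by (simp add: sum.distrib inner_sum_left[symmetric])
    finally have uw: "(\<Sum>i<n. u i \<bullet> (w i - x i)) = (\<Sum>i<n. u i \<bullet> (v i - u i))" .
    have qc: "(norm (v i))\<^sup>2 - (norm (u i))\<^sup>2 - 2 * (u i \<bullet> (v i - u i)) = (norm (c i))\<^sup>2" for i
      unfolding c_def power2_norm_eq_inner
      by (simp add: inner_diff_left inner_diff_right inner_commute)
    have gi: "gradF n m lam gt x i \<bullet> (w i - x i) = (1 / real n) * (loc_g gt m i (x i) \<bullet> (w i - x i))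
        + (lam / real n) * (u i \<bullet> (w i - x i))" for i
      unfolding gradF_def u_def by (simp add: inner_add_left)
    have g: "(\<Sum>i<n. gradF n m lam gt x i \<bullet> (w i - x i)) = (1 / real n) * (\<Sum>i<n. loc_g gt m i (x i) \<bullet> (w i - x i))
        + (lam / real n) * (\<Sum>i<n. u i \<bullet> (w i - x i))"
      unfolding gi by (simp add: sum.distrib sum_distrib_left)
    have ff: "FF n m lam ft w - FF n m lam ft x = (1 / real n) * (\<Sum>i<n. loc_f ft m i (w i) - loc_f ft m i (x i))
        + lam / (2 * real n) * (\<Sum>i<n. (norm (v i))\<^sup>2 - (norm (u i))\<^sup>2)"
      unfolding FF_def u_def v_def by (simp add: sum_subtractf algebra_simps)
    have "bregF n m lam ft gt w x
       = (1 / real n) * (\<Sum>i<n. loc_f ft m i (w i) - loc_f ft m i (x i) - loc_g gt m i (x i) \<bullet> (w i - x i))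
         + lam / (2 * real n) * ((\<Sum>i<n. (norm (v i))\<^sup>2 - (norm (u i))\<^sup>2) - 2 * (\<Sum>i<n. u i \<bullet> (w i - x i)))"
      unfolding bregF_def ff g sum_subtractf[of _ _ "{..<n}"] using nr
      by (simp add: algebra_simps)
    also have "\<dots> = S1 + S2"
      unfolding fa uw S1_def S2_def qc[symmetric]
      by (simp add: sum_subtractf sum_distrib_left)
    finally show ?thesis .
  qed
  have S1nn: "S1 \<ge> 0" unfolding S1_def using Dnn nr m
    by (intro mult_nonneg_nonneg sum_nonneg) auto
  have S2nn: "S2 \<ge> 0" unfolding S2_def using lam nr
    by (intro mult_nonneg_nonneg sum_nonneg) auto
  have Lt0: "Lt \<ge> 0" using L_nonneg[OF sm[of 0 0]] n m by simp
  have "expected_err n m lam p gt x w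
      \<le> (\<Sum>i<n. M i / ((real n)\<^sup>2*(1-p)) + lam\<^sup>2 * (norm (c i))\<^sup>2 / ((real n)\<^sup>2 * p))"
    unfolding LHS by (intro sum_mono per)
  also have "\<dots> \<le> (\<Sum>i<n. (2 * Lt * ((1 / real m) * (\<Sum>j<m. D i j))) / ((real n)\<^sup>2*(1-p))
                      + lam\<^sup>2 * (norm (c i))\<^sup>2 / ((real n)\<^sup>2 * p))"
    using p by (intro sum_mono add_right_mono divide_right_mono Mb) auto
  also have "\<dots> = 2 * (Lt / (real n * (1 - p))) * S1 + 2 * (lam / (real n * p)) * S2"
  proof -
    have pi: "(2 * Lt * T) / ((real n)\<^sup>2*(1-p)) + lam\<^sup>2 * Q / ((real n)\<^sup>2 * p)
        = 2 * (Lt / (real n * (1 - p))) * ((1 / real n) * T) + 2 * (lam / (real n * p)) * (lam / (2 * real n) * Q)" for T Q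
      using nr p by (simp add: field_simps power2_eq_square)
    show ?thesis unfolding pi S1_def S2_def
      by (simp add: sum.distrib sum_distrib_left mult.assoc)
  qed
  also have "\<dots> \<le> 2 * max (Lt / (real n * (1 - p))) (lam / (real n * p)) * S1
               + 2 * max (Lt / (real n * (1 - p))) (lam / (real n * p)) * S2"
    using S1nn S2nn by (intro add_mono mult_right_mono) auto
  also have "\<dots> = 2 * max (Lt / (real n * (1 - p))) (lam / (real n * p)) * bregF n m lam ft gt w x"
    unfolding breg by (simp add: algebra_simps)
  finally show ?thesis .
qed


end
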